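(* For every circular arc graph $G$, $\operatorname{box}(G)\le 2\omega(G)+1\le 2\Delta(G)+3$.
   Context: A graph $G$ is a circular arc graph if its vertices can be put in one-to-one correspondence with a set of arcs of a circle so that two vertices are adjacent iff their arcs intersect. $\omega(G)$ is the clique number and $\Delta(G)$ the maximum degree. The boxicity $\operatorname{box}(G)$ is the minimum $b$ such that $G$ is the intersection graph of axis-parallel boxes in $\mathbb{R}^b$ (products of $b$ closed intervals), one box per vertex. *)

theory Defs
  imports Complex_Main
begin

definition simple_graph :: "'a set \<Rightarrow> ('a \<Rightarrow> 'a \<Rightarrow> bool) \<Rightarrow> bool" where
  "simple_graph V E \<longleftrightarrow> finite V \<and> (\<forall>u v. E u v \<longrightarrow> E v u) \<and> (\<forall>v. \<not> E v v)
     \<and> (\<forall>u v. E u v \<longrightarrow> u \<in> V \<and> v \<in> V)"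

text \<open>The circle is modelled as R/Z, i.e. points are reals taken modulo 1.
The closed arc starting at a and running counterclockwise for length l (l \<ge> 0;
l \<ge> 1 gives the whole circle) is the set of points x with frac (x - a) \<le> l.\<close>

definition arc :: "real \<Rightarrow> real \<Rightarrow> real set" where
  "arc a l = {x. 0 \<le> x \<and> x < 1 \<and> frac (x - a) \<le> l}"

definition circular_arc_graph :: "'a set \<Rightarrow> ('a \<Rightarrow> 'a \<Rightarrow> bool) \<Rightarrow> bool" where
  "circular_arc_graph V E \<longleftrightarrow>
     (\<exists>(a :: 'a \<Rightarrow> real) (l :: 'a \<Rightarrow> real). (\<forall>v\<in>V. 0 \<le> l v) \<and>
        (\<forall>u\<in>V. \<forall>v\<in>V. u \<noteq> v \<longrightarrow> (E u v \<longleftrightarrow> arc (a u) (l u) \<inter> arc (a v) (l v) \<noteq> {})))"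

text \<open>Box representation in R^b: vertex v gets the box
\<Prod>_{i<b} [lo v i, hi v i]; two closed boxes meet iff their intervals meet in every coordinate.\<close>

definition box_rep :: "'a set \<Rightarrow> ('a \<Rightarrow> 'a \<Rightarrow> bool) \<Rightarrow> nat \<Rightarrow> bool" where
  "box_rep V E b \<longleftrightarrow>
     (\<exists>(lo :: 'a \<Rightarrow> nat \<Rightarrow> real) (hi :: 'a \<Rightarrow> nat \<Rightarrow> real).
        (\<forall>v\<in>V. \<forall>i<b. lo v i \<le> hi v i) \<and>
        (\<forall>u\<in>V. \<forall>v\<in>V. u \<noteq> v \<longrightarrow>
            (E u v \<longleftrightarrow> (\<forall>i<b. lo u i \<le> hi v i \<and> lo v i \<le> hi u i))))"

definition boxicity :: "'a set \<Rightarrow> ('a \<Rightarrow> 'a \<Rightarrow> bool) \<Rightarrow> nat" where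
  "boxicity V E = (LEAST b. box_rep V E b)"

definition clique_number :: "'a set \<Rightarrow> ('a \<Rightarrow> 'a \<Rightarrow> bool) \<Rightarrow> nat" where
  "clique_number V E = Max {card C | C. C \<subseteq> V \<and> (\<forall>u\<in>C. \<forall>v\<in>C. u \<noteq> v \<longrightarrow> E u v)}"

definition degree :: "'a set \<Rightarrow> ('a \<Rightarrow> 'a \<Rightarrow> bool) \<Rightarrow> 'a \<Rightarrow> nat" where
  "degree V E v = card {u \<in> V. E v u}"

definition max_degree :: "'a set \<Rightarrow> ('a \<Rightarrow> 'a \<Rightarrow> bool) \<Rightarrow> nat" where
  "max_degree V E = (if V = {} then 0 else Max (degree V E ` V))"

end

theory Submission
  imports Defs
begin

lemma arc_interval:
  assumes "\<not> frac (- a) \<le> l" and l0: "0 \<le> l"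
  shows "arc a l = {frac a .. frac a + l} \<and> frac a + l < 1"
proof -
  define s where "s = frac a"
  have s0: "0 \<le> s" "s < 1" using s_def frac_lt_1 by auto
  have "frac a \<noteq> 0"
  proof
    assume "frac a = 0"
    then have "a \<in> \<int>" by simp
    then have "frac (-a) = 0" by (simp add: frac_neg)
    then show False using assms frac_ge_0[of "-a"] using l0 by linarith
  qed
  then have fn: "frac (-a) = 1 - s" using frac_non_zero s_def by blast
  have lt: "s + l < 1" using assms fn by linarith
  have "x \<in> arc a l \<longleftrightarrow> x \<in> {s .. s + l}" for x
  proof -
    have fx: "frac (x - a) = frac (x - s)" using frac_diff_simp[of x a] s_def by simp
    show ?thesis
    proof (cases "s \<le> x")
      case True
      show ?thesis
      proof (cases "x < 1")
        case True
        have "frac (x - s) = x - s" using \<open>s \<le> x\<close> True s0 by (intro frac_eq_id) auto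
        then show ?thesis unfolding arc_def using fx True \<open>s \<le> x\<close> s0 by auto
      next
        case False
        then show ?thesis unfolding arc_def using lt by auto
      qed
    next
      case False
      have "frac (x - s) = x - s + 1" if "0 \<le> x"
      proof -
        have "frac (x - s) = frac ((x - s) + 1)" using frac_1_eq[of "x - s"] by simp
        also have "\<dots> = x - s + 1" using that False s0 by (intro frac_eq_id) auto
        finally show ?thesis .
      qed
      note h = this
      have "x \<notin> arc a l"
      proof
        assume "x \<in> arc a l"
        then have x0: "0 \<le> x" and fl: "frac (x - a) \<le> l" by (auto simp: arc_def)
        have "frac (x - s) = x - s + 1" using h x0 .
        then show False using fl fx lt x0 by linarith
      qed
      then show ?thesis using False by simp
    qed
  qed
  then have "arc a l = {s .. s + l}" by blast
  then show ?thesis using lt s_def by simp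
qed

lemma ivl_meet:
  fixes p q r t :: real
  assumes "p \<le> q" "r \<le> t"
  shows "{p..q} \<inter> {r..t} \<noteq> {} \<longleftrightarrow> p \<le> t \<and> r \<le> q"
proof
  assume "{p..q} \<inter> {r..t} \<noteq> {}"
  then obtain x where "x \<in> {p..q}" "x \<in> {r..t}" by blast
  then show "p \<le> t \<and> r \<le> q" by auto
next
  assume h: "p \<le> t \<and> r \<le> q"
  have "max p r \<in> {p..q} \<inter> {r..t}" using h assms by auto
  then show "{p..q} \<inter> {r..t} \<noteq> {}" by blast
qed

lemma omega_le_Delta:
  assumes fin: "finite V"
  shows "clique_number V E \<le> max_degree V E + 1"
proof -
  define Cl where "Cl = {card C | C. C \<subseteq> V \<and> (\<forall>u\<in>C. \<forall>v\<in>C. u \<noteq> v \<longrightarrow> E u v)}"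
  have "Cl \<subseteq> {..card V}" unfolding Cl_def using card_mono[OF fin] by auto
  then have finCl: "finite Cl" using finite_subset by blast
  have "0 \<in> Cl" unfolding Cl_def by (rule CollectI, rule exI[of _ "{}"]) auto
  then have "Cl \<noteq> {}" by blast
  then have "Max Cl \<in> Cl" using finCl Max_in by blast
  then obtain C where C: "C \<subseteq> V" "\<forall>u\<in>C. \<forall>v\<in>C. u \<noteq> v \<longrightarrow> E u v" "card C = Max Cl"
    unfolding Cl_def by auto
  have cn: "clique_number V E = card C" using C(3) unfolding clique_number_def Cl_def by simp
  show ?thesis
  proof (cases "C = {}")
    case True
    then show ?thesis using cn by simp
  next
    case False
    then obtain v where v: "v \<in> C" by blast
    have sub: "C - {v} \<subseteq> {u \<in> V. E v u}" using C v by auto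
    have "card (C - {v}) \<le> degree V E v" unfolding degree_def
      using card_mono[OF _ sub] fin by auto
    moreover have "card (C - {v}) = card C - 1" using v by simp
    moreover have "degree V E v \<le> max_degree V E"
    proof -
      have "v \<in> V" using v C by auto
      then show ?thesis unfolding max_degree_def using fin by auto
    qed
    moreover have "card C \<ge> 1" using v C fin finite_subset
      by (metis One_nat_def Suc_leI card_gt_0_iff empty_iff)
    ultimately show ?thesis using cn by linarith
  qed
qed

theorem theorem6:
  fixes V :: "'a set" and E :: "'a \<Rightarrow> 'a \<Rightarrow> bool"
  assumes "simple_graph V E"
    and "circular_arc_graph V E"
  shows "boxicity V E \<le> 2 * clique_number V E + 1
         \<and> 2 * clique_number V E + 1 \<le> 2 * max_degree V E + 3"
proof -
  have fin: "finite V" and sym: "\<And>u v. E u v \<Longrightarrow> E v u"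
    using assms(1) unfolding simple_graph_def by auto
  from assms(2) obtain a l where l0: "\<forall>v\<in>V. 0 \<le> l v"
    and rep: "\<forall>u\<in>V. \<forall>v\<in>V. u \<noteq> v \<longrightarrow> (E u v \<longleftrightarrow> arc (a u) (l u) \<inter> arc (a v) (l v) \<noteq> {})"
    unfolding circular_arc_graph_def by blast
  define S where "S = {v\<in>V. frac (- a v) \<le> l v}"
  have SV: "S \<subseteq> V" unfolding S_def by auto
  have finS: "finite S" using SV fin finite_subset by blast
  define Cl where "Cl = {card C | C. C \<subseteq> V \<and> (\<forall>u\<in>C. \<forall>v\<in>C. u \<noteq> v \<longrightarrow> E u v)}"
  have "Cl \<subseteq> {..card V}" unfolding Cl_def using card_mono[OF fin] by auto
  then have finCl: "finite Cl" using finite_subset by blast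
  have in0: "0 \<in> arc (a v) (l v)" if "v \<in> S" for v
    using that unfolding S_def arc_def by simp
  have Scl: "\<forall>u\<in>S. \<forall>v\<in>S. u \<noteq> v \<longrightarrow> E u v"
  proof (intro ballI impI)
    fix u v assume "u \<in> S" "v \<in> S" "u \<noteq> v"
    then have "0 \<in> arc (a u) (l u) \<inter> arc (a v) (l v)" using in0 by blast
    then show "E u v" using rep \<open>u \<in> S\<close> \<open>v \<in> S\<close> \<open>u \<noteq> v\<close> SV by blast
  qed
  have "card S \<in> Cl" unfolding Cl_def using SV Scl by blast
  then have cS: "card S \<le> clique_number V E" unfolding clique_number_def Cl_def[symmetric]
    using finCl by simp
  define n where "n = card S"
  obtain f where f: "bij_betw f {0..<n} S" using ex_bij_betw_nat_finite[OF finS] n_def by blast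
  have notS: "arc (a u) (l u) = {frac (a u) .. frac (a u) + l u} \<and> frac (a u) + l u < 1"
    if "u \<in> V" "u \<notin> S" for u
    using that l0 unfolding S_def by (intro arc_interval) auto
  define lo where "lo u i = (if i < n then (if u = f i then 0 else if E (f i) u then 0 else 1)
      else (if u \<in> S then 0 else frac (a u)))" for u i
  define hi where "hi u i = (if i < n then (if u = f i then 0 else 1)
      else (if u \<in> S then 1 else frac (a u) + l u))" for u i
  have lohi: "lo v i \<le> hi v i" if "v \<in> V" "i < n + 1" for v i
    using that notS[of v] l0 unfolding lo_def hi_def by auto
  have edge: "E u v \<longleftrightarrow> (\<forall>i<n+1. lo u i \<le> hi v i \<and> lo v i \<le> hi u i)"
    if uv: "u \<in> V" "v \<in> V" "u \<noteq> v" for u v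
  proof
    assume e: "E u v"
    show "\<forall>i<n+1. lo u i \<le> hi v i \<and> lo v i \<le> hi u i"
    proof (intro allI impI)
      fix i assume i: "i < n + 1"
      show "lo u i \<le> hi v i \<and> lo v i \<le> hi u i"
      proof (cases "i < n")
        case True
        then show ?thesis using e sym[OF e] uv unfolding lo_def hi_def by auto
      next
        case False
        show ?thesis
        proof (cases "u \<in> S")
          case uS: True
          show ?thesis
          proof (cases "v \<in> S")
            case True
            then show ?thesis using uS False unfolding lo_def hi_def by auto
          next
            case vS: False
            then show ?thesis using uS False notS[of v] uv l0 unfolding lo_def hi_def by auto
          qed
        next
          case uS: False
          show ?thesis
          proof (cases "v \<in> S")
            case True
            then show ?thesis using uS False notS[of u] uv l0 unfolding lo_def hi_def by auto
          next
            case vS: False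
            have "arc (a u) (l u) \<inter> arc (a v) (l v) \<noteq> {}" using rep uv e by blast
            then have "frac (a u) \<le> frac (a v) + l v \<and> frac (a v) \<le> frac (a u) + l u"
              using notS[of u] notS[of v] uS vS uv l0 ivl_meet by simp
            then show ?thesis using uS vS False unfolding lo_def hi_def by auto
          qed
        qed
      qed
    qed
  next
    assume P: "\<forall>i<n+1. lo u i \<le> hi v i \<and> lo v i \<le> hi u i"
    show "E u v"
    proof (cases "u \<in> S")
      case True
      then obtain i where i: "i < n" "f i = u" using f unfolding bij_betw_def by auto
      have "lo v i \<le> hi u i" using P i by auto
      then show ?thesis using i uv unfolding lo_def hi_def by (auto split: if_splits)
    next
      case uS: False
      show ?thesis
      proof (cases "v \<in> S")
        case True
        then obtain i where i: "i < n" "f i = v" using f unfolding bij_betw_def by auto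
        have "lo u i \<le> hi v i" using P i by auto
        then have "E v u" using i uv unfolding lo_def hi_def by (auto split: if_splits)
        then show ?thesis using sym by blast
      next
        case vS: False
        have "lo u n \<le> hi v n \<and> lo v n \<le> hi u n" using P by auto
        then have "frac (a u) \<le> frac (a v) + l v \<and> frac (a v) \<le> frac (a u) + l u"
          using uS vS unfolding lo_def hi_def by auto
        then have "arc (a u) (l u) \<inter> arc (a v) (l v) \<noteq> {}"
          using notS[of u] notS[of v] uS vS uv l0 ivl_meet by simp
        then show ?thesis using rep uv by blast
      qed
    qed
  qed
  have "box_rep V E (n + 1)" unfolding box_rep_def
    using lohi edge by blast
  then have "boxicity V E \<le> n + 1" unfolding boxicity_def by (rule Least_le)
  then have part1: "boxicity V E \<le> 2 * clique_number V E + 1" using cS n_def by linarith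
  have "clique_number V E \<le> max_degree V E + 1" using omega_le_Delta[OF fin] .
  then show ?thesis using part1 by linarith
qed

end
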